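(* Let $n=2p$ with $p\ge 11$ prime, and let $G(\circ)$ be a group of order $n$ on $G$. Then $\delta_{\cong}(\circ)<\delta_{\not\cong}(\circ)$.
   Context: $G$ is a set of size $n$. $\mathrm{dist}(\circ,\ast)=|\{(a,b)\in G\times G:a\circ b\ne a\ast b\}|$. $\delta_{\cong}(\circ)=\min\{\mathrm{dist}(\circ,\ast): G(\ast)\cong G(\circ),\ G(\ast)\ne G(\circ)\}$ and $\delta_{\not\cong}(\circ)=\min\{\mathrm{dist}(\circ,\ast): G(\ast)\not\cong G(\circ)\}$ (minima over groups $G(\ast)$ defined on $G$). *)

theory Defs
  imports "HOL-Algebra.Algebra" "HOL-Computational_Algebra.Primes"
begin

text \<open>A binary operation f on the underlying set G, viewed as a structure (monoid record).
  Only its values on G x G matter. The unit is the (unique, if it exists) two-sided identity.\<close>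
definition grp :: "'a set \<Rightarrow> ('a \<Rightarrow> 'a \<Rightarrow> 'a) \<Rightarrow> 'a monoid" where
  "grp G f = \<lparr>carrier = G, monoid.mult = f,
              one = (THE e. e \<in> G \<and> (\<forall>x\<in>G. f e x = x \<and> f x e = x))\<rparr>"

definition group_op :: "'a set \<Rightarrow> ('a \<Rightarrow> 'a \<Rightarrow> 'a) \<Rightarrow> bool" where
  "group_op G f \<longleftrightarrow> group (grp G f)"

definition op_dist :: "'a set \<Rightarrow> ('a \<Rightarrow> 'a \<Rightarrow> 'a) \<Rightarrow> ('a \<Rightarrow> 'a \<Rightarrow> 'a) \<Rightarrow> nat" where
  "op_dist G f g = card {(a, b). a \<in> G \<and> b \<in> G \<and> f a b \<noteq> g a b}"

text \<open>delta_iso: minimum distance to a different group on G isomorphic to G(f).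
  Two group structures on G are equal iff the operations agree on G x G, i.e. dist > 0 means distinct.\<close>
definition delta_iso :: "'a set \<Rightarrow> ('a \<Rightarrow> 'a \<Rightarrow> 'a) \<Rightarrow> nat" where
  "delta_iso G f = Min {op_dist G f g | g. group_op G g \<and> grp G g \<cong> grp G f \<and> op_dist G f g \<noteq> 0}"

definition delta_noniso :: "'a set \<Rightarrow> ('a \<Rightarrow> 'a \<Rightarrow> 'a) \<Rightarrow> nat" where
  "delta_noniso G f = Min {op_dist G f g | g. group_op G g \<and> \<not> (grp G g \<cong> grp G f)}"

end

theory Submission
  imports Defs
begin

lemma grp_carrier[simp]: "carrier (grp G f) = G" by (simp add: grp_def)
lemma grp_mult[simp]: "monoid.mult (grp G f) = f" by (simp add: grp_def)

lemma group_grpI: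
  assumes cl: "\<And>x y. x\<in>G \<Longrightarrow> y\<in>G \<Longrightarrow> f x y \<in> G"
  and as: "\<And>x y z. x\<in>G \<Longrightarrow> y\<in>G \<Longrightarrow> z\<in>G \<Longrightarrow> f (f x y) z = f x (f y z)"
  and u: "u\<in>G" and lu: "\<And>x. x\<in>G \<Longrightarrow> f u x = x" and ru: "\<And>x. x\<in>G \<Longrightarrow> f x u = x"
  and inv: "\<And>x. x\<in>G \<Longrightarrow> \<exists>y\<in>G. f y x = u"
  shows "group (grp G f)"
proof -
  have one: "one (grp G f) = u" unfolding grp_def
    apply simp
    apply (rule the_equality)
    using u lu ru apply blast
    by (metis lu ru u)
  show ?thesis
    by (rule groupI) (auto simp: one cl as u lu inv)
qed

lemma law_group:
  assumes gr: "group (grp I M)" and bij: "bij_betw \<psi> I G"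
  and law: "\<And>a b. a\<in>I \<Longrightarrow> b\<in>I \<Longrightarrow> \<psi> (M a b) = g (\<psi> a) (\<psi> b)"
  shows "group (grp G g)"
proof -
  interpret A: group "grp I M" by (rule gr)
  let ?u = "one (grp I M)"
  have u: "?u \<in> I" using A.one_closed by simp
  have cl: "M a b \<in> I" if "a\<in>I" "b\<in>I" for a b using A.m_closed that by simp
  have surj: "\<exists>a\<in>I. x = \<psi> a" if "x\<in>G" for x using bij that unfolding bij_betw_def by auto
  have im: "\<psi> a \<in> G" if "a \<in> I" for a using bij that unfolding bij_betw_def by auto
  show ?thesis
  proof (rule group_grpI[where u="\<psi> ?u"])
    fix x y assume "x\<in>G" "y\<in>G"
    then obtain a b where "a\<in>I" "b\<in>I" "x = \<psi> a" "y = \<psi> b" using surj by metis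
    then show "g x y \<in> G" using law[of a b] cl im by metis
  next
    fix x y z assume "x\<in>G" "y\<in>G" "z\<in>G"
    then obtain a b c where abc: "a\<in>I" "b\<in>I" "c\<in>I" "x = \<psi> a" "y = \<psi> b" "z = \<psi> c" using surj by metis
    have "M (M a b) c = M a (M b c)" using A.m_assoc[of a b c] abc by simp
    then show "g (g x y) z = g x (g y z)" using abc law cl by metis
  next
    show "\<psi> ?u \<in> G" using im u .
  next
    fix x assume "x\<in>G"
    then obtain a where a: "a\<in>I" "x = \<psi> a" using surj by metis
    have "M ?u a = a" "M a ?u = a" using A.l_one[of a] A.r_one[of a] a by auto
    then show "g (\<psi> ?u) x = x" "g x (\<psi> ?u) = x" using a law u by metis+
  next
    fix x assume "x\<in>G"
    then obtain a where a: "a\<in>I" "x = \<psi> a" using surj by metis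
    obtain b where b: "b \<in> I" "M b a = ?u" using A.l_inv_ex[of a] a by auto
    then show "\<exists>y\<in>G. g y x = \<psi> ?u" using a law im by metis
  qed
qed

lemma law_iso:
  assumes bij: "bij_betw \<psi> I G"
  and law: "\<And>a b. a\<in>I \<Longrightarrow> b\<in>I \<Longrightarrow> \<psi> (M a b) = g (\<psi> a) (\<psi> b)"
  shows "grp I M \<cong> grp G g"
proof -
  have "\<psi> \<in> iso (grp I M) (grp G g)"
    using bij law unfolding iso_def hom_def bij_betw_def by auto
  then show ?thesis unfolding is_iso_def by blast
qed

lemma law_law_iso:
  assumes b1: "bij_betw \<psi>1 I G" and b2: "bij_betw \<psi>2 I H"
  and cl: "\<And>a b. a\<in>I \<Longrightarrow> b\<in>I \<Longrightarrow> M a b \<in> I"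
  and l1: "\<And>a b. a\<in>I \<Longrightarrow> b\<in>I \<Longrightarrow> \<psi>1 (M a b) = f (\<psi>1 a) (\<psi>1 b)"
  and l2: "\<And>a b. a\<in>I \<Longrightarrow> b\<in>I \<Longrightarrow> \<psi>2 (M a b) = g (\<psi>2 a) (\<psi>2 b)"
  shows "grp G f \<cong> grp H g"
proof -
  let ?phi = "\<lambda>x. \<psi>2 (inv_into I \<psi>1 x)"
  have bi: "bij_betw (inv_into I \<psi>1) G I" using b1 by (rule bij_betw_inv_into)
  have bb: "bij_betw ?phi G H" using bij_betw_trans[OF bi b2] by (simp add: comp_def)
  have "?phi (f x y) = g (?phi x) (?phi y)" if xy: "x\<in>G" "y\<in>G" for x y
  proof -
    obtain a b where ab: "a\<in>I" "b\<in>I" "x = \<psi>1 a" "y = \<psi>1 b" using b1 xy unfolding bij_betw_def by blast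
    have inj: "inj_on \<psi>1 I" using b1 unfolding bij_betw_def by blast
    have "f x y = \<psi>1 (M a b)" using l1 ab by simp
    then have "inv_into I \<psi>1 (f x y) = M a b" using inv_into_f_f[OF inj cl[OF ab(1,2)]] by simp
    moreover have "inv_into I \<psi>1 x = a" "inv_into I \<psi>1 y = b" using inv_into_f_f[OF inj] ab by auto
    ultimately show ?thesis using l2 ab by simp
  qed
  then have "?phi \<in> iso (grp G f) (grp H g)"
    using bb unfolding iso_def hom_def bij_betw_def by auto
  then show ?thesis unfolding is_iso_def by blast
qed

definition Iset :: "nat \<Rightarrow> (nat \<times> nat) set" where "Iset p = {..<p} \<times> {..<2}"
definition mm :: "nat \<Rightarrow> nat \<Rightarrow> nat \<times> nat \<Rightarrow> nat \<times> nat \<Rightarrow> nat \<times> nat" where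
  "mm p e a b = ((fst a + (if snd a = 0 then fst b else e * fst b)) mod p, (snd a + snd b) mod 2)"

lemma mm_closed: "p > 0 \<Longrightarrow> a \<in> Iset p \<Longrightarrow> b \<in> Iset p \<Longrightarrow> mm p e a b \<in> Iset p"
  by (auto simp: Iset_def mm_def)

lemma two_cases: "(j::nat) < 2 \<Longrightarrow> j = 0 \<or> j = 1" by auto

lemma mm_assoc:
  assumes p: "p > 0" and ee: "(e*e) mod p = 1 mod p"
    and a: "a \<in> Iset p" and b: "b \<in> Iset p" and c: "c \<in> Iset p"
  shows "mm p e (mm p e a b) c = mm p e a (mm p e b c)"
proof -
  obtain i j where ij: "a = (i,j)" "j < 2" using a by (cases a) (auto simp: Iset_def)
  obtain k l where kl: "b = (k,l)" "l < 2" using b by (cases b) (auto simp: Iset_def)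
  obtain u v where uv: "c = (u,v)" "v < 2" using c by (cases c) (auto simp: Iset_def)
  have eeu: "(x + e * (e * u)) mod p = (x + u) mod p" for x
  proof -
    have "(x + e * (e * u)) mod p = (x + ((e*e) mod p) * u) mod p"
      by (metis mod_add_right_eq mod_mult_left_eq mult.assoc)
    also have "\<dots> = (x + u) mod p" using ee
      by (metis mod_add_right_eq mod_mult_left_eq mult_1)
    finally show ?thesis .
  qed
  consider "j = 0" | "j = 1" "l = 0" | "j = 1" "l = 1" using ij kl by arith
  then show ?thesis
  proof cases
    case 1
    then show ?thesis using ij kl uv
      by (simp add: mm_def mod_add_left_eq mod_add_right_eq add.assoc)
  next
    case 2
    have "(i + (e * k + e * u)) mod p = (i + e * ((k + u) mod p)) mod p"
      by (metis add.assoc distrib_left mod_add_right_eq mod_mult_right_eq)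
    then show ?thesis using 2 ij kl uv
      by (simp add: mm_def mod_add_left_eq mod_add_right_eq add.assoc)
  next
    case 3
    have "((i + e * k) mod p + u) mod p = (i + e * ((k + e * u) mod p)) mod p"
    proof -
      have "(i + e * ((k + e * u) mod p)) mod p = (i + e * k + e * (e * u)) mod p"
        by (metis add.assoc distrib_left mod_add_right_eq mod_mult_right_eq)
      also have "\<dots> = (i + e*k + u) mod p" by (rule eeu)
      finally show ?thesis by (simp add: mod_add_left_eq)
    qed
    moreover have "v = Suc (Suc v mod 2) mod 2" using two_cases[OF uv(2)] by auto
    ultimately show ?thesis using 3 ij kl uv
      by (auto simp: mm_def mod_add_left_eq mod_add_right_eq)
  qed
qed

lemma mm_group:
  assumes p: "p > 0" and ee: "(e*e) mod p = 1 mod p"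
  shows "group (grp (Iset p) (mm p e))"
proof (rule group_grpI[where u="(0,0)"])
  show "\<And>x y. x \<in> Iset p \<Longrightarrow> y \<in> Iset p \<Longrightarrow> mm p e x y \<in> Iset p" using mm_closed p by blast
  show "\<And>x y z. x \<in> Iset p \<Longrightarrow> y \<in> Iset p \<Longrightarrow> z \<in> Iset p \<Longrightarrow> mm p e (mm p e x y) z = mm p e x (mm p e y z)"
    using mm_assoc[OF p ee] by blast
  show "(0, 0) \<in> Iset p" using p by (simp add: Iset_def)
  show "\<And>x. x \<in> Iset p \<Longrightarrow> mm p e (0, 0) x = x" by (auto simp: Iset_def mm_def)
  show "\<And>x. x \<in> Iset p \<Longrightarrow> mm p e x (0, 0) = x" by (auto simp: Iset_def mm_def)
  fix x assume x: "x \<in> Iset p"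
  obtain i j where ij: "x = (i,j)" "i < p" "j < 2" using x by (cases x) (auto simp: Iset_def)
  define c where "c = (if j = 0 then i else e * i)"
  have "((p - c mod p) mod p + c) mod p = 0"
  proof -
    have "((p - c mod p) mod p + c) mod p = ((p - c mod p) + c mod p) mod p"
      by (metis mod_add_left_eq mod_add_right_eq)
    also have "\<dots> = p mod p" using p by (simp add: le_add_diff_inverse2 less_imp_le)
    finally show ?thesis by simp
  qed
  then have "mm p e ((p - c mod p) mod p, j) x = (0,0)" using ij by (auto simp: mm_def c_def)
  moreover have "((p - c mod p) mod p, j) \<in> Iset p" using ij p by (simp add: Iset_def)
  ultimately show "\<exists>y\<in>Iset p. mm p e y x = (0, 0)" by blast
qed

definition comm_on :: "'a set \<Rightarrow> ('a \<Rightarrow> 'a \<Rightarrow> 'a) \<Rightarrow> bool" where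
  "comm_on G f \<longleftrightarrow> (\<forall>x\<in>G. \<forall>y\<in>G. f x y = f y x)"

definition NCs :: "'a set \<Rightarrow> ('a \<Rightarrow> 'a \<Rightarrow> 'a) \<Rightarrow> ('a \<times> 'a) set" where
  "NCs G f = {(x, y). x \<in> G \<and> y \<in> G \<and> f x y \<noteq> f y x}"

lemma mm_comm1: "comm_on (Iset p) (mm p 1)"
  by (auto simp: comm_on_def mm_def add.commute)

lemma mm_noncomm: "p > 2 \<Longrightarrow> \<not> comm_on (Iset p) (mm p (p-1))"
  unfolding comm_on_def
  apply (rule notI)
  apply (drule bspec[of _ _ "(0,1)"], simp add: Iset_def)
  apply (drule bspec[of _ _ "(1,0)"], simp add: Iset_def)
  apply (simp add: mm_def)
  done

lemma prime_dvd_2x: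
  assumes "Factorial_Ring.prime (p::nat)" "p > 2" "int p dvd 2 * x" "\<bar>x\<bar> < int p"
  shows "x = 0"
proof -
  have pi: "Factorial_Ring.prime (int p)" using assms(1) by simp
  then have "int p dvd 2 \<or> int p dvd x" using assms(3) prime_dvd_mult_iff by blast
  moreover have "\<not> int p dvd 2" using assms(2) by (auto dest: zdvd_imp_le)
  ultimately have "int p dvd x" by blast
  then show ?thesis using assms(4) by (metis dvd_imp_le_int abs_of_nat not_le)
qed

lemma modeq_dvd: "(x::nat) mod p = y mod p \<Longrightarrow> int p dvd int x - int y"
  by (metis mod_eq_dvd_iff of_nat_mod)

lemma dvd_strip: "int p dvd (int p * y + 2 * x) \<Longrightarrow> int p dvd 2 * x"
  by (simp add: dvd_add_right_iff)

lemma F_lemma: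
  assumes pr: "Factorial_Ring.prime (p::nat)" and p2: "p > 2"
    and eq: "(x::nat) mod p = y mod p" and xy: "int x - int y = int p * z + 2 * w" and w: "\<bar>w\<bar> < int p"
  shows "w = 0"
proof -
  have "int p dvd int p * z + 2 * w" using modeq_dvd[OF eq] xy by simp
  then have "int p dvd 2 * w" by (rule dvd_strip)
  then show ?thesis using prime_dvd_2x[OF pr p2] w by blast
qed

lemma mm_NC_card:
  assumes pr: "Factorial_Ring.prime (p::nat)" and p2: "p > 2"
  shows "3 * p * (p - 1) \<le> card (NCs (Iset p) (mm p (p-1)))"
proof -
  let ?M = "mm p (p-1)"
  have pm: "int (p - 1) = int p - 1" using p2 by simp
  have F1: "?M (i,1) (k,0) \<noteq> ?M (k,0) (i,1)" if "i<p" "k<p" "0<k" for i k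
  proof
    assume "?M (i,1) (k,0) = ?M (k,0) (i,1)"
    then have e: "(i + (p-1)*k) mod p = (k + i) mod p" by (simp add: mm_def)
    have "int (i + (p-1)*k) - int (k + i) = int p * int k + 2 * (- int k)" by (simp only: of_nat_add of_nat_mult pm) (simp add: algebra_simps)
    from F_lemma[OF pr p2 e this] that show False by simp
  qed
  have F2: "?M (i,1) (k,1) \<noteq> ?M (k,1) (i,1)" if "i<p" "k<p" "i\<noteq>k" for i k
  proof
    assume "?M (i,1) (k,1) = ?M (k,1) (i,1)"
    then have e: "(i + (p-1)*k) mod p = (k + (p-1)*i) mod p" by (simp add: mm_def)
    have d: "int (i + (p-1)*k) - int (k + (p-1)*i) = int p * (int k - int i) + 2 * (int i - int k)" by (simp only: of_nat_add of_nat_mult pm) (simp add: algebra_simps)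
    have "\<bar>int i - int k\<bar> < int p" using that by linarith
    then have "int i - int k = 0" using F_lemma[OF pr p2 e d] by blast
    then show False using that by simp
  qed
  have F3: "?M (i,0) (k,1) \<noteq> ?M (k,1) (i,0)" if "i<p" "k<p" "0<i" for i k
  proof
    assume "?M (i,0) (k,1) = ?M (k,1) (i,0)"
    then have e: "(i + k) mod p = (k + (p-1)*i) mod p" by (simp add: mm_def)
    have "int (i + k) - int (k + (p-1)*i) = int p * (- int i) + 2 * int i" by (simp only: of_nat_add of_nat_mult pm) (simp add: algebra_simps)
    from F_lemma[OF pr p2 e this] that show False by simp
  qed
  define A where "A = Sigma ({..<p} \<times> {1}) (\<lambda>a. Iset p - {(0,0), a})"
  define B where "B = ({1..<p} \<times> {0::nat}) \<times> ({..<p} \<times> {1::nat})"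
  have AB: "A \<union> B \<subseteq> NCs (Iset p) ?M"
  proof
    fix z assume z: "z \<in> A \<union> B"
    then obtain a b where zab: "z = (a, b)" by (cases z)
    show "z \<in> NCs (Iset p) ?M"
    proof (cases "z \<in> A")
      case True
      then obtain i k l where "a = (i,1)" "b = (k,l)" "i < p" "k < p" "l < 2" "(k,l) \<noteq> (0,0)" "(k,l) \<noteq> (i,1)"
        using zab by (auto simp: A_def Iset_def)
      moreover have "l = 0 \<or> l = 1" using \<open>l < 2\<close> by arith
      ultimately show ?thesis using F1 F2 zab by (auto simp: NCs_def Iset_def)
    next
      case False
      then have "z \<in> B" using z by blast
      then show ?thesis using F3 zab by (auto simp: NCs_def Iset_def B_def)
    qed
  qed
  have fin: "finite (NCs (Iset p) ?M)"
    by (rule finite_subset[of _ "Iset p \<times> Iset p"]) (auto simp: NCs_def Iset_def)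
  have cI: "card (Iset p) = 2 * p" by (simp add: Iset_def card_cartesian_product)
  have cA1: "card (Iset p - {(0,0), a}) = 2 * p - 2" if "a \<in> {..<p} \<times> {1}" for a
  proof -
    have "{(0,0), a} \<subseteq> Iset p" using that p2 by (auto simp: Iset_def)
    moreover have "card {(0::nat,0::nat), a} = 2" using that by auto
    ultimately show ?thesis using cI by (simp add: card_Diff_subset Iset_def)
  qed
  have cA: "card A = p * (2 * p - 2)"
  proof -
    have "card A = (\<Sum>a\<in>{..<p} \<times> {1}. card (Iset p - {(0,0), a}))"
      unfolding A_def by (rule card_SigmaI) (auto simp: Iset_def)
    also have "\<dots> = (\<Sum>a\<in>{..<p} \<times> {1::nat}. 2 * p - 2)" by (rule sum.cong) (auto simp: cA1)
    also have "\<dots> = p * (2 * p - 2)" by (simp add: card_cartesian_product)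
    finally show ?thesis .
  qed
  have cB: "card B = (p - 1) * p" by (simp add: B_def card_cartesian_product)
  have disj: "A \<inter> B = {}" by (auto simp: A_def B_def)
  have finAB: "finite A" "finite B" by (auto simp: A_def B_def Iset_def)
  have "card (A \<union> B) = p * (2 * p - 2) + (p - 1) * p" using card_Un_disjoint[OF finAB disj] cA cB by simp
  also have "\<dots> = 3 * p * (p - 1)" by (simp add: algebra_simps diff_mult_distrib2)
  finally show ?thesis using card_mono[OF fin AB] by simp
qed

lemma law_comm:
  assumes bij: "bij_betw \<psi> I G" and cl: "\<And>a b. a\<in>I \<Longrightarrow> b\<in>I \<Longrightarrow> M a b \<in> I"
  and law: "\<And>a b. a\<in>I \<Longrightarrow> b\<in>I \<Longrightarrow> \<psi> (M a b) = f (\<psi> a) (\<psi> b)"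
  shows "comm_on G f \<longleftrightarrow> comm_on I M"
proof
  assume c: "comm_on G f"
  have inj: "inj_on \<psi> I" using bij unfolding bij_betw_def by blast
  show "comm_on I M" unfolding comm_on_def
  proof (intro ballI)
    fix a b assume ab: "a \<in> I" "b \<in> I"
    have g: "\<psi> a \<in> G" "\<psi> b \<in> G" using bij ab unfolding bij_betw_def by auto
    have "f (\<psi> a) (\<psi> b) = f (\<psi> b) (\<psi> a)" using c g unfolding comm_on_def by blast
    then have "\<psi> (M a b) = \<psi> (M b a)" using law ab by simp
    then show "M a b = M b a" using inj cl ab inj_onD by metis
  qed
next
  assume c: "comm_on I M"
  show "comm_on G f" unfolding comm_on_def
  proof (intro ballI)
    fix x y assume xy: "x \<in> G" "y \<in> G"
    then obtain a b where ab: "a\<in>I" "b\<in>I" "x = \<psi> a" "y = \<psi> b" using bij unfolding bij_betw_def by blast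
    have "M a b = M b a" using c ab unfolding comm_on_def by blast
    then show "f x y = f y x" using law[OF ab(1,2)] law[OF ab(2,1)] ab(3,4) by simp
  qed
qed

lemma law_NC:
  assumes bij: "bij_betw \<psi> I G" and cl: "\<And>a b. a\<in>I \<Longrightarrow> b\<in>I \<Longrightarrow> M a b \<in> I"
  and law: "\<And>a b. a\<in>I \<Longrightarrow> b\<in>I \<Longrightarrow> \<psi> (M a b) = f (\<psi> a) (\<psi> b)"
  shows "card (NCs G f) = card (NCs I M)"
proof -
  have inj: "inj_on \<psi> I" using bij unfolding bij_betw_def by blast
  define h where "h = (\<lambda>z. (\<psi> (fst z), \<psi> (snd z)))"
  have img: "NCs G f = h ` NCs I M"
  proof
    show "NCs G f \<subseteq> h ` NCs I M"
    proof
      fix z assume z: "z \<in> NCs G f"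
      then obtain x y where xy: "z = (x,y)" "x \<in> G" "y \<in> G" "f x y \<noteq> f y x" unfolding NCs_def by blast
      then obtain a b where ab: "a\<in>I" "b\<in>I" "x = \<psi> a" "y = \<psi> b" using bij unfolding bij_betw_def by blast
      then have "M a b \<noteq> M b a" using xy law[OF ab(1,2)] law[OF ab(2,1)] by auto
      then have "(a,b) \<in> NCs I M" using ab unfolding NCs_def by blast
      moreover have "z = h (a,b)" using ab xy h_def by simp
      ultimately show "z \<in> h ` NCs I M" by blast
    qed
  next
    show "h ` NCs I M \<subseteq> NCs G f"
    proof
      fix z assume "z \<in> h ` NCs I M"
      then obtain w where w: "w \<in> NCs I M" "z = h w" by blast
      then obtain a b where ab: "a\<in>I" "b\<in>I" "M a b \<noteq> M b a" "w = (a,b)" unfolding NCs_def by blast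
      have "\<psi> (M a b) \<noteq> \<psi> (M b a)" using inj cl ab inj_onD by metis
      then have "f (\<psi> a) (\<psi> b) \<noteq> f (\<psi> b) (\<psi> a)" using law ab by simp
      moreover have "\<psi> a \<in> G" "\<psi> b \<in> G" using bij ab unfolding bij_betw_def by auto
      ultimately show "z \<in> NCs G f" using ab w h_def unfolding NCs_def by simp
    qed
  qed
  have "inj_on h (NCs I M)"
  proof (rule inj_onI)
    fix u v assume uv: "u \<in> NCs I M" "v \<in> NCs I M" "h u = h v"
    have s: "fst u \<in> I" "snd u \<in> I" "fst v \<in> I" "snd v \<in> I" using uv(1,2) unfolding NCs_def by auto
    have "\<psi> (fst u) = \<psi> (fst v)" "\<psi> (snd u) = \<psi> (snd v)" using uv(3) unfolding h_def by simp_all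
    then have "fst u = fst v" "snd u = snd v" using inj s inj_onD by metis+
    then show "u = v" by (simp add: prod_eq_iff)
  qed
  then show ?thesis using img card_image by simp
qed

lemma dist_sym: "op_dist G f g = op_dist G g f"
  proof -
  have "{(a, b). a \<in> G \<and> b \<in> G \<and> f a b \<noteq> g a b} = {(a, b). a \<in> G \<and> b \<in> G \<and> g a b \<noteq> f a b}"
    by (simp add: eq_commute)
  then show ?thesis unfolding op_dist_def by simp
qed

lemma NC_dist:
  assumes fin: "finite G" and c: "comm_on G f"
  shows "card (NCs G g) \<le> 2 * op_dist G f g"
proof -
  let ?D = "{(a, b). a \<in> G \<and> b \<in> G \<and> f a b \<noteq> g a b}"
  have finD: "finite ?D" by (rule finite_subset[of _ "G \<times> G"]) (use fin in auto)
  have "NCs G g \<subseteq> ?D \<union> (\<lambda>(a,b). (b,a)) ` ?D"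
  proof
    fix z assume "z \<in> NCs G g"
    then obtain x y where xy: "z = (x,y)" "x \<in> G" "y \<in> G" "g x y \<noteq> g y x" unfolding NCs_def by blast
    have fc: "f x y = f y x" using c xy unfolding comm_on_def by blast
    show "z \<in> ?D \<union> (\<lambda>(a,b). (b,a)) ` ?D"
    proof (cases "f x y = g x y")
      case True
      then have "(y,x) \<in> ?D" using xy fc by auto
      then have "(x,y) \<in> (\<lambda>(a,b). (b,a)) ` ?D" by (rule rev_image_eqI) simp
      then show ?thesis using xy by blast
    next
      case False
      then show ?thesis using xy by blast
    qed
  qed
  then have "card (NCs G g) \<le> card (?D \<union> (\<lambda>(a,b). (b,a)) ` ?D)"
    by (rule card_mono[rotated]) (use finD in auto)
  also have "\<dots> \<le> card ?D + card ((\<lambda>(a,b). (b,a)) ` ?D)" by (rule card_Un_le)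
  also have "\<dots> \<le> card ?D + card ?D" using card_image_le[OF finD] by simp
  finally show ?thesis unfolding op_dist_def by simp
qed


lemma iso_comm:
  assumes i: "grp G g \<cong> grp H h" and cl: "\<And>a b. a\<in>G \<Longrightarrow> b\<in>G \<Longrightarrow> g a b \<in> G"
  shows "comm_on G g \<longleftrightarrow> comm_on H h"
proof -
  obtain \<phi> where "\<phi> \<in> iso (grp G g) (grp H h)" using i unfolding is_iso_def by blast
  then have b: "bij_betw \<phi> G H" and l: "\<And>a b. a\<in>G \<Longrightarrow> b\<in>G \<Longrightarrow> \<phi> (g a b) = h (\<phi> a) (\<phi> b)"
    unfolding iso_def hom_def by auto
  show ?thesis using law_comm[of \<phi> G H g h, OF b cl l] by simp
qed

context group
begin

lemma pow_mod:
  assumes x: "x \<in> carrier G" and q: "x [^] (q::nat) = \<one>"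
  shows "x [^] (n::nat) = x [^] (n mod q)"
proof -
  have "x [^] n = x [^] (q * (n div q) + n mod q)" by simp
  also have "\<dots> = x [^] (q * (n div q)) \<otimes> x [^] (n mod q)"
    using x nat_pow_mult[of x "q * (n div q)" "n mod q"] by simp
  also have "\<dots> = (x [^] q) [^] (n div q) \<otimes> x [^] (n mod q)"
    using x by (simp add: nat_pow_pow)
  also have "\<dots> = x [^] (n mod q)" using q x by simp
  finally show ?thesis .
qed

lemma exists_inv2:
  assumes fin: "finite (carrier G)" and c: "card (carrier G) = 2 * p" and pr: "Factorial_Ring.prime p"
  shows "\<exists>s\<in>carrier G. s \<noteq> \<one> \<and> s \<otimes> s = \<one>"
proof -
  have "order G = 2 ^ 1 * p" using c by (simp add: order_def)
  then obtain H where H: "subgroup H G" "card H = 2"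
    using sylow_thm[of 2 G 1 p] fin is_group by auto
  have one: "\<one> \<in> H" using H(1) by (rule subgroup.one_closed)
  obtain a b where ab: "a \<noteq> b" "H = {a, b}" using H(2) card_2_iff by metis
  obtain s where s: "s \<in> H" "s \<noteq> \<one>" using ab one by blast
  have sc: "s \<in> carrier G" using s H(1) subgroup.subset by blast
  have Hs: "H = {\<one>, s}" using ab one s by blast
  have "s \<otimes> s \<in> H" using H(1) s(1) by (rule subgroup.m_closed[OF _ s(1)])
  moreover have "s \<otimes> s \<noteq> s"
  proof
    assume "s \<otimes> s = s"
    then have "s \<otimes> s = s \<otimes> \<one>" using sc by simp
    then show False using s(2) sc l_cancel by blast
  qed
  ultimately have "s \<otimes> s = \<one>" using Hs by blast
  then show ?thesis using sc s(2) by blast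
qed

lemma exists_ordp:
  assumes fin: "finite (carrier G)" and c: "card (carrier G) = 2 * p" and pr: "Factorial_Ring.prime p"
  shows "\<exists>r\<in>carrier G. ord r = p"
proof -
  have "order G = p ^ 1 * 2" using c by (simp add: order_def)
  then obtain Q where Q: "subgroup Q G" "card Q = p"
    using sylow_thm[of p G 1 2] fin is_group pr by auto
  have p1: "p > 1" using pr prime_gt_1_nat by blast
  have one: "\<one> \<in> Q" using Q(1) by (rule subgroup.one_closed)
  have "Q \<noteq> {\<one>}" using Q(2) p1 by auto
  then obtain r where r: "r \<in> Q" "r \<noteq> \<one>" using one by blast
  have rc: "r \<in> carrier G" using r Q(1) subgroup.subset by blast
  interpret K: group "G\<lparr>carrier := Q\<rparr>" using Q(1) is_group by (rule subgroup.subgroup_is_group)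
  have gs: "subgroup (generate G {r}) G" using rc by (intro generate_is_subgroup) simp
  have gq: "generate G {r} \<subseteq> Q" using generate_subgroup_incl[OF _ Q(1)] r by simp
  have "subgroup (generate G {r}) (G\<lparr>carrier := Q\<rparr>)" using subgroup_incl[OF gs Q(1) gq] .
  then have "card (rcosets\<^bsub>G\<lparr>carrier := Q\<rparr>\<^esub> (generate G {r})) * card (generate G {r}) = order (G\<lparr>carrier := Q\<rparr>)"
    by (rule K.lagrange)
  then have "card (generate G {r}) dvd p" using Q(2) by (metis dvd_triv_right order_def partial_object.select_convs(1) partial_object.surjective partial_object.update_convs(1))
  then have "ord r dvd p" using generate_pow_card[OF rc] by simp
  then have "ord r = 1 \<or> ord r = p" using pr by (simp add: prime_nat_iff)
  moreover have "ord r \<noteq> 1" using ord_eq_1[OF rc] r(2) by simp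
  ultimately show ?thesis using rc by blast
qed

end

context group
begin

lemma structure_2p:
  assumes fin: "finite (carrier G)" and c: "card (carrier G) = 2 * p"
    and pr: "Factorial_Ring.prime p" and p2: "p > 2"
  shows "\<exists>\<psi> e. (e = 1 \<or> e = p - 1) \<and> bij_betw \<psi> (Iset p) (carrier G) \<and>
           (\<forall>a\<in>Iset p. \<forall>b\<in>Iset p. \<psi> (mm p e a b) = \<psi> a \<otimes> \<psi> b)"
proof -
  obtain s where s: "s \<in> carrier G" "s \<noteq> \<one>" "s \<otimes> s = \<one>" using exists_inv2[OF fin c pr] by blast
  obtain r where r: "r \<in> carrier G" "ord r = p" using exists_ordp[OF fin c pr] by blast
  have rp: "r [^] p = \<one>" using pow_ord_eq_1[OF r(1)] r(2) by simp
  have rmod: "r [^] (n::nat) = r [^] (n mod p)" for n using pow_mod[OF r(1) rp] .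
  have s2: "s [^] (2::nat) = \<one>" using s by (simp add: numeral_2_eq_2)
  have smod: "s [^] (n::nat) = s [^] (n mod 2)" for n using pow_mod[OF s(1) s2] .
  have s1: "s [^] (1::nat) = s" using s by simp
  have rinj: "i = k" if "r [^] (i::nat) = r [^] k" "i < p" "k < p" for i k
    using ord_inj[OF r(1)] that r(2) unfolding inj_on_def by force
  have odd: "odd p" using pr p2 prime_odd_nat by blast
  have notpow: "s \<noteq> r [^] (i::nat)" for i
  proof
    assume si: "s = r [^] i"
    have "s [^] p = r [^] (i * p)" using si r by (simp add: nat_pow_pow)
    also have "\<dots> = (r [^] p) [^] i" using r by (simp add: nat_pow_pow mult.commute)
    also have "\<dots> = \<one>" using rp by simp
    finally have "s [^] p = \<one>" .
    moreover have "s [^] p = s" using smod[of p] odd s1 by (simp add: odd_iff_mod_2_eq_one)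
    ultimately show False using s(2) by simp
  qed
  have invpow: "inv (r [^] k) = r [^] (p - k)" if "k \<le> p" for k
  proof -
    have "r [^] (p - k) \<otimes> r [^] k = \<one>" using r that nat_pow_mult[of r "p-k" k] rp by simp
    then show ?thesis using r by (simp add: inv_equality)
  qed
  have nots: False if "r [^] (i::nat) = r [^] k \<otimes> s" "k < p" for i k
  proof -
    have "s = inv (r [^] k) \<otimes> (r [^] k \<otimes> s)" using r s by (simp add: m_assoc[symmetric])
    also have "\<dots> = r [^] (p - k) \<otimes> r [^] i" using that invpow by simp
    also have "\<dots> = r [^] (p - k + i)" using r nat_pow_mult by simp
    finally show False using notpow by blast
  qed
  define \<psi> where "\<psi> = (\<lambda>a::nat\<times>nat. r [^] (fst a) \<otimes> s [^] (snd a))"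
  have \<psi>c: "\<psi> a \<in> carrier G" for a :: "nat \<times> nat" using r s unfolding \<psi>_def by simp
  have inj: "inj_on \<psi> (Iset p)"
  proof (rule inj_onI)
    fix a b assume a: "a \<in> Iset p" and b: "b \<in> Iset p" and e: "\<psi> a = \<psi> b"
    obtain i j where ij: "a = (i,j)" "i < p" "j < 2" using a by (cases a) (auto simp: Iset_def)
    obtain k l where kl: "b = (k,l)" "l < 2" "k < p" using b by (cases b) (auto simp: Iset_def)
    have e': "r [^] i \<otimes> s [^] j = r [^] k \<otimes> s [^] l" using e ij kl unfolding \<psi>_def by simp
    consider "j = l" | "j = 0" "l = 1" | "j = 1" "l = 0" using ij kl by arith
    then show "a = b"
    proof cases
      case 1
      then have "r [^] i = r [^] k" using e' r s r_cancel by (metis nat_pow_closed)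
      then show ?thesis using rinj ij kl 1 by simp
    next
      case 2
      then show ?thesis using e' nots[of i k] kl r s1 by simp
    next
      case 3
      then show ?thesis using e' nots[of k i] ij r s1 by simp
    qed
  qed
  have cI: "card (Iset p) = 2 * p" by (simp add: Iset_def card_cartesian_product)
  have img: "\<psi> ` Iset p = carrier G"
  proof (rule card_subset_eq[OF fin])
    show "\<psi> ` Iset p \<subseteq> carrier G" using \<psi>c by blast
    show "card (\<psi> ` Iset p) = card (carrier G)" using card_image[OF inj] cI c by simp
  qed
  have bij: "bij_betw \<psi> (Iset p) (carrier G)" using inj img unfolding bij_betw_def by blast
  obtain k where k: "s \<otimes> r \<otimes> s = r [^] k" "k < p"
  proof -
    have "s \<otimes> r \<otimes> s \<in> \<psi> ` Iset p" using img r s by simp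
    then obtain a where a: "a \<in> Iset p" "s \<otimes> r \<otimes> s = \<psi> a" by blast
    obtain i j where ij: "a = (i,j)" "i < p" "j < 2" using a by (cases a) (auto simp: Iset_def)
    have "j \<noteq> 1"
    proof
      assume j: "j = 1"
      then have "s \<otimes> r \<otimes> s = r [^] i \<otimes> s" using a ij s1 unfolding \<psi>_def by simp
      then have sr: "s \<otimes> r = r [^] i" using r s r_cancel by (metis m_closed nat_pow_closed)
      have "s = s \<otimes> r \<otimes> inv r" using r s by (simp add: m_assoc)
      also have "\<dots> = r [^] i \<otimes> r [^] (p - 1)" using sr invpow[of 1] p2 r by simp
      also have "\<dots> = r [^] (i + (p - 1))" using r nat_pow_mult by simp
      finally show False using notpow by blast
    qed
    then have "j = 0" using ij by arith
    then have "s \<otimes> r \<otimes> s = r [^] i" using a ij r unfolding \<psi>_def by simp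
    then show ?thesis using that ij by blast
  qed
  have ss: "s \<otimes> (s \<otimes> x) = x" if "x \<in> carrier G" for x using s that by (simp add: m_assoc[symmetric])
  have conj: "s \<otimes> r [^] n \<otimes> s = r [^] (k * n)" for n :: nat
  proof (induction n)
    case 0
    then show ?case using s by simp
  next
    case (Suc n)
    have "s \<otimes> r [^] Suc n \<otimes> s = (s \<otimes> r [^] n \<otimes> s) \<otimes> (s \<otimes> r \<otimes> s)"
      using r s(1) ss by (simp add: m_assoc)
    also have "\<dots> = r [^] (k * n) \<otimes> r [^] k" using Suc k by simp
    also have "\<dots> = r [^] (k * Suc n)" using r nat_pow_mult by (simp add: add.commute)
    finally show ?case .
  qed
  have "r = s \<otimes> (s \<otimes> r \<otimes> s) \<otimes> s" using r s ss by (simp add: m_assoc)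
  also have "\<dots> = s \<otimes> r [^] k \<otimes> s" using k by simp
  also have "\<dots> = r [^] (k * k)" using conj by simp
  also have "\<dots> = r [^] ((k * k) mod p)" using rmod by simp
  finally have "r [^] (1::nat) = r [^] ((k * k) mod p)" using r by simp
  then have kk: "(k * k) mod p = 1" using rinj p2 pr prime_gt_0_nat by fastforce
  have ke: "k = 1 \<or> k = p - 1"
  proof -
    have k1: "k \<ge> 1" using kk p2 by (cases k) auto
    have "(k * k) mod p = 1 mod p" using kk p2 by simp
    moreover have "1 \<le> k * k" using k1 by simp
    ultimately have "p dvd k * k - 1" using mod_eq_dvd_iff_nat by blast
    moreover have "k * k - 1 = (k - 1) * (k + 1)" using k1 by (simp add: algebra_simps)
    ultimately have "p dvd (k - 1) * (k + 1)" by simp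
    then have "p dvd (k - 1) \<or> p dvd (k + 1)" using pr prime_dvd_mult_iff by blast
    then show ?thesis
    proof
      assume d: "p dvd k - 1"
      have "k - 1 = 0"
      proof (rule ccontr)
        assume "k - 1 \<noteq> 0"
        then have "p \<le> k - 1" using d by (simp add: dvd_imp_le)
        then show False using k(2) by simp
      qed
      then show ?thesis using k1 by simp
    next
      assume "p dvd k + 1"
      then have "p \<le> k + 1" by (simp add: dvd_imp_le)
      then show ?thesis using k(2) by arith
    qed
  qed
  have comm: "s [^] j \<otimes> r [^] m = r [^] (if j = 0 then m else k * m) \<otimes> s [^] j" if "j < 2" for j m :: nat
  proof (cases "j = 0")
    case True
    then show ?thesis using r s by simp
  next
    case False
    then have j: "j = 1" using that by arith
    have "s \<otimes> r [^] m = s \<otimes> r [^] m \<otimes> (s \<otimes> s)" using r s by simp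
    also have "\<dots> = (s \<otimes> r [^] m \<otimes> s) \<otimes> s" using r s(1) by (simp add: m_assoc)
    also have "\<dots> = r [^] (k * m) \<otimes> s" using conj by simp
    finally show ?thesis using j s1 by simp
  qed
  have law: "\<psi> (mm p k a b) = \<psi> a \<otimes> \<psi> b" if a: "a \<in> Iset p" and b: "b \<in> Iset p" for a b
  proof -
    obtain i j where ij: "a = (i,j)" "i < p" "j < 2" using a by (cases a) (auto simp: Iset_def)
    obtain m l where ml: "b = (m,l)" "l < 2" "m < p" using b by (cases b) (auto simp: Iset_def)
    define cc where "cc = (if j = 0 then m else k * m)"
    have "\<psi> a \<otimes> \<psi> b = r [^] i \<otimes> (s [^] j \<otimes> r [^] m) \<otimes> s [^] l"
      using ij ml r s unfolding \<psi>_def by (simp add: m_assoc)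
    also have "\<dots> = r [^] i \<otimes> (r [^] cc \<otimes> s [^] j) \<otimes> s [^] l"
      using comm[OF ij(3)] cc_def by simp
    also have "\<dots> = (r [^] i \<otimes> r [^] cc) \<otimes> (s [^] j \<otimes> s [^] l)"
      using r s by (simp add: m_assoc)
    also have "\<dots> = r [^] (i + cc) \<otimes> s [^] (j + l)"
      using r s by (simp add: nat_pow_mult)
    also have "\<dots> = r [^] ((i + cc) mod p) \<otimes> s [^] ((j + l) mod 2)"
      using rmod smod by metis
    also have "\<dots> = \<psi> (mm p k a b)" unfolding \<psi>_def mm_def cc_def using ij ml by simp
    finally show ?thesis by simp
  qed
  show ?thesis using ke bij law by blast
qed

end

lemma op_closed:
  assumes "group (grp G f)" "x \<in> G" "y \<in> G" shows "f x y \<in> G"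
proof -
  interpret F: group "grp G f" by fact
  show ?thesis using F.m_closed[of x y] assms by simp
qed

lemma struct_op:
  assumes "group_op G f" "finite G" "card G = 2 * p" "Factorial_Ring.prime p" "p > 2"
  shows "\<exists>\<psi> e. (e = 1 \<or> e = p - 1) \<and> bij_betw \<psi> (Iset p) G \<and>
           (\<forall>a\<in>Iset p. \<forall>b\<in>Iset p. \<psi> (mm p e a b) = f (\<psi> a) (\<psi> b))"
  using group.structure_2p[of "grp G f" p] assms unfolding group_op_def by simp

lemma ee_lemma: "(e::nat) = 1 \<or> e = p - 1 \<Longrightarrow> p > 2 \<Longrightarrow> (e * e) mod p = 1 mod p"
proof (elim disjE)
  assume e: "e = p - 1" and p: "p > 2"
  have "(p - 1) * (p - 1) = p * (p - 2) + 1" using p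
    by (cases p) (auto simp: algebra_simps)
  then have "e * e = p * (p - 2) + 1" using e by simp
  then show "(e * e) mod p = 1 mod p" by (simp only: mod_mult_self4)
qed simp

lemma lower_bound:
  assumes pr: "Factorial_Ring.prime p" and p2: "p > 2" and fin: "finite G" and c: "card G = 2 * p"
    and gf: "group_op G f" and gg: "group_op G g" and ni: "\<not> (grp G g \<cong> grp G f)"
  shows "3 * p * (p - 1) \<le> 2 * op_dist G f g"
proof -
  obtain \<psi>f ef where f: "ef = 1 \<or> ef = p - 1" "bij_betw \<psi>f (Iset p) G"
      "\<And>a b. a\<in>Iset p \<Longrightarrow> b\<in>Iset p \<Longrightarrow> \<psi>f (mm p ef a b) = f (\<psi>f a) (\<psi>f b)"
    using struct_op[OF gf fin c pr p2] by blast
  obtain \<psi>g eg where g: "eg = 1 \<or> eg = p - 1" "bij_betw \<psi>g (Iset p) G"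
      "\<And>a b. a\<in>Iset p \<Longrightarrow> b\<in>Iset p \<Longrightarrow> \<psi>g (mm p eg a b) = g (\<psi>g a) (\<psi>g b)"
    using struct_op[OF gg fin c pr p2] by blast
  have p0: "p > 0" using p2 by simp
  have ne: "ef \<noteq> eg"
  proof
    assume efg: "ef = eg"
    have "grp G g \<cong> grp G f"
      by (rule law_law_iso[OF g(2) f(2), of "mm p eg"]) (use mm_closed[OF p0] g(3) f(3) efg in auto)
    then show False using ni by blast
  qed
  show ?thesis
  proof (cases "ef = 1")
    case True
    then have eg: "eg = p - 1" using ne g(1) by auto
    have "comm_on G f" using law_comm[of \<psi>f "Iset p" G "mm p ef" f, OF f(2) mm_closed[OF p0] f(3)] True mm_comm1 by simp
    then have "card (NCs G g) \<le> 2 * op_dist G f g" using NC_dist[OF fin] by blast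
    moreover have "card (NCs G g) = card (NCs (Iset p) (mm p (p - 1)))"
      using law_NC[of \<psi>g "Iset p" G "mm p eg" g, OF g(2) mm_closed[OF p0] g(3)] eg by simp
    ultimately show ?thesis using mm_NC_card[OF pr p2] by simp
  next
    case False
    then have ef: "ef = p - 1" and eg: "eg = 1" using ne f(1) g(1) p2 by auto
    have "comm_on G g" using law_comm[of \<psi>g "Iset p" G "mm p eg" g, OF g(2) mm_closed[OF p0] g(3)] eg mm_comm1 by simp
    then have "card (NCs G f) \<le> 2 * op_dist G g f" using NC_dist[OF fin] by blast
    moreover have "card (NCs G f) = card (NCs (Iset p) (mm p (p - 1)))"
      using law_NC[of \<psi>f "Iset p" G "mm p ef" f, OF f(2) mm_closed[OF p0] f(3)] ef by simp
    ultimately show ?thesis using mm_NC_card[OF pr p2] dist_sym[of G g f] by simp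
  qed
qed

lemma noniso_exists:
  assumes pr: "Factorial_Ring.prime p" and p2: "p > 2" and fin: "finite G" and c: "card G = 2 * p"
    and gf: "group_op G f"
  shows "\<exists>g. group_op G g \<and> \<not> (grp G g \<cong> grp G f)"
proof -
  obtain \<psi> ef where f: "ef = 1 \<or> ef = p - 1" "bij_betw \<psi> (Iset p) G"
      "\<And>a b. a\<in>Iset p \<Longrightarrow> b\<in>Iset p \<Longrightarrow> \<psi> (mm p ef a b) = f (\<psi> a) (\<psi> b)"
    using struct_op[OF gf fin c pr p2] by blast
  have p0: "p > 0" using p2 by simp
  define e' where "e' = (if ef = 1 then p - 1 else 1)"
  have e': "e' = 1 \<or> e' = p - 1" unfolding e'_def by simp
  define g where "g = (\<lambda>x y. \<psi> (mm p e' (inv_into (Iset p) \<psi> x) (inv_into (Iset p) \<psi> y)))"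
  have inj: "inj_on \<psi> (Iset p)" using f(2) unfolding bij_betw_def by blast
  have lg: "\<psi> (mm p e' a b) = g (\<psi> a) (\<psi> b)" if "a \<in> Iset p" "b \<in> Iset p" for a b
    unfolding g_def using inv_into_f_f[OF inj] that by simp
  have grp: "group (grp G g)"
    by (rule law_group[OF mm_group[OF p0 ee_lemma[OF e' p2]] f(2)]) (use lg in simp)
  have clg: "g x y \<in> G" if "x \<in> G" "y \<in> G" for x y using op_closed[OF grp] that by simp
  have cg: "comm_on G g \<longleftrightarrow> comm_on (Iset p) (mm p e')" using law_comm[of \<psi> "Iset p" G "mm p e'" g, OF f(2) mm_closed[OF p0] lg] by simp
  have cf: "comm_on G f \<longleftrightarrow> comm_on (Iset p) (mm p ef)" using law_comm[of \<psi> "Iset p" G "mm p ef" f, OF f(2) mm_closed[OF p0] f(3)] .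
  have "\<not> (grp G g \<cong> grp G f)"
  proof
    assume "grp G g \<cong> grp G f"
    then have "comm_on G g \<longleftrightarrow> comm_on G f" using iso_comm clg by blast
    then show False using cg cf e'_def f(1) mm_comm1 mm_noncomm[OF p2] by (cases "ef = 1") auto
  qed
  then show ?thesis using grp group_op_def by blast
qed

lemma dist_le: "finite G \<Longrightarrow> op_dist G f g \<le> card (G \<times> G)"
  unfolding op_dist_def by (rule card_mono) auto

lemma upper_bound:
  assumes fin: "finite G" and c: "card G = 2 * p" and p0: "p > 0" and gf: "group_op G f"
  shows "\<exists>g. group_op G g \<and> grp G g \<cong> grp G f \<and> op_dist G f g \<noteq> 0 \<and> op_dist G f g \<le> 12 * p"
proof -
  have gr: "group (grp G f)" using gf unfolding group_op_def .
  interpret F: group "grp G f" by (rule gr)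
  define e0 where "e0 = one (grp G f)"
  have e0: "e0 \<in> G" using F.one_closed unfolding e0_def by simp
  have "card G \<ge> 2" using c p0 by simp
  then have "G - {e0} \<noteq> {}" using e0 by (metis One_nat_def card.empty card_Diff_singleton_if card.insert_remove card_le_Suc0_iff_eq card_le_Suc_iff insert_absorb le0 not_numeral_le_zero numeral_le_one_iff semiring_norm(69) Diff_empty fin)
  then obtain b where b: "b \<in> G" "b \<noteq> e0" by blast
  define \<sigma> where "\<sigma> = (\<lambda>x. if x = e0 then b else if x = b then e0 else x)"
  have ss: "\<sigma> (\<sigma> x) = x" for x unfolding \<sigma>_def using b by auto
  have sG: "\<sigma> x \<in> G" if "x \<in> G" for x unfolding \<sigma>_def using b e0 that by auto
  have bij: "bij_betw \<sigma> G G"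
    by (rule bij_betw_byWitness[where f'=\<sigma>]) (use ss sG in auto)
  define g where "g = (\<lambda>x y. \<sigma> (f (\<sigma> x) (\<sigma> y)))"
  have lg: "\<sigma> (f a b) = g (\<sigma> a) (\<sigma> b)" for a b unfolding g_def using ss by simp
  have grg: "group (grp G g)" by (rule law_group[OF gr bij]) (use lg in simp)
  have iso: "grp G g \<cong> grp G f" by (rule law_iso[OF bij]) (simp add: g_def ss)
  have ff: "f e0 e0 = e0" using F.l_one[of e0] e0 unfolding e0_def by simp
  have fbb: "f b b \<noteq> b"
  proof
    assume "f b b = b"
    moreover have "f b e0 = b" using F.r_one[of b] b unfolding e0_def by simp
    ultimately have "f b b = f b e0" by simp
    then have "b = e0" using F.l_cancel[of b b e0] b e0 by simp
    then show False using b by simp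
  qed
  have gbb: "g b b = b" unfolding g_def using ff by (simp add: \<sigma>_def)
  let ?D = "{(a, c). a \<in> G \<and> c \<in> G \<and> f a c \<noteq> g a c}"
  have finD: "finite ?D" by (rule finite_subset[of _ "G \<times> G"]) (use fin in auto)
  have "(b,b) \<in> ?D" using b fbb gbb by simp
  then have d0: "op_dist G f g \<noteq> 0" unfolding op_dist_def using finD by auto
  define T where "T = {e0, b}"
  define h where "h = (\<lambda>z. (fst z, f (inv\<^bsub>grp G f\<^esub> (fst z)) (snd z)))"
  have "?D \<subseteq> (T \<times> G) \<union> (G \<times> T) \<union> h ` (G \<times> T)"
  proof
    fix z assume "z \<in> ?D"
    then obtain x y where xy: "z = (x,y)" "x \<in> G" "y \<in> G" "f x y \<noteq> g x y" by blast
    show "z \<in> (T \<times> G) \<union> (G \<times> T) \<union> h ` (G \<times> T)"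
    proof (cases "x \<in> T \<or> y \<in> T")
      case True
      then show ?thesis using xy by blast
    next
      case False
      then have sx: "\<sigma> x = x" "\<sigma> y = y" unfolding \<sigma>_def T_def by auto
      then have "g x y = \<sigma> (f x y)" unfolding g_def by simp
      then have fT: "f x y \<in> T" using xy(4) unfolding \<sigma>_def T_def by (auto split: if_splits)
      have "f (inv\<^bsub>grp G f\<^esub> x) (f x y) = y"
        using F.m_assoc[of "inv\<^bsub>grp G f\<^esub> x" x y] F.l_inv[of x] F.l_one[of y] F.inv_closed[of x] xy by simp
      then have "z = h (x, f x y)" unfolding h_def using xy by simp
      moreover have "(x, f x y) \<in> G \<times> T" using xy fT by simp
      ultimately show ?thesis by blast
    qed
  qed
  moreover have "finite T" unfolding T_def by simp
  ultimately have "card ?D \<le> card ((T \<times> G) \<union> (G \<times> T) \<union> h ` (G \<times> T))"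
    using fin by (intro card_mono) auto
  also have "\<dots> \<le> card (T \<times> G) + card (G \<times> T) + card (h ` (G \<times> T))"
    by (meson add_le_mono card_Un_le le_trans order_refl)
  also have "\<dots> \<le> card (T \<times> G) + card (G \<times> T) + card (G \<times> T)"
    using card_image_le[of "G \<times> T" h] fin \<open>finite T\<close> by simp
  also have "\<dots> = 12 * p"
  proof -
    have "card T = 2" unfolding T_def using b by simp
    then show ?thesis using c by (simp add: card_cartesian_product)
  qed
  finally have "op_dist G f g \<le> 12 * p" unfolding op_dist_def .
  then show ?thesis using grg iso d0 group_op_def by blast
qed

theorem lemma4p12:
  fixes G :: "'a set" and f :: "'a \<Rightarrow> 'a \<Rightarrow> 'a" and p :: nat
  assumes "Factorial_Ring.prime p" and "p \<ge> 11"
    and "finite G" and "card G = 2 * p"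
    and "group_op G f"
  shows "delta_iso G f < delta_noniso G f"
proof -
  note pr = assms(1) and fin = assms(3) and c = assms(4) and gf = assms(5)
  have p2: "p > 2" using assms(2) by simp
  define S1 where "S1 = {op_dist G f g | g. group_op G g \<and> grp G g \<cong> grp G f \<and> op_dist G f g \<noteq> 0}"
  define S2 where "S2 = {op_dist G f g | g. group_op G g \<and> \<not> (grp G g \<cong> grp G f)}"
  have fS1: "finite S1"
    by (rule finite_subset[of _ "{..card (G \<times> G)}"]) (use dist_le[OF fin] in \<open>auto simp: S1_def\<close>)
  have fS2: "finite S2"
    by (rule finite_subset[of _ "{..card (G \<times> G)}"]) (use dist_le[OF fin] in \<open>auto simp: S2_def\<close>)
  obtain g1 where g1: "group_op G g1" "grp G g1 \<cong> grp G f" "op_dist G f g1 \<noteq> 0" "op_dist G f g1 \<le> 12 * p"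
    using upper_bound[OF fin c _ gf] p2 by auto
  have "op_dist G f g1 \<in> S1" unfolding S1_def using g1 by blast
  then have d1: "delta_iso G f \<le> 12 * p"
    using Min_le[OF fS1] g1(4) unfolding delta_iso_def S1_def[symmetric] by (meson le_trans)
  have "S2 \<noteq> {}" using noniso_exists[OF pr p2 fin c gf] unfolding S2_def by blast
  then have "Min S2 \<in> S2" using Min_in[OF fS2] by blast
  then obtain g2 where g2: "group_op G g2" "\<not> (grp G g2 \<cong> grp G f)" "Min S2 = op_dist G f g2"
    unfolding S2_def by blast
  have d2: "3 * p * (p - 1) \<le> 2 * delta_noniso G f"
    using lower_bound[OF pr p2 fin c gf g2(1,2)] g2(3) unfolding delta_noniso_def S2_def[symmetric] by simp
  have "3 * p * 10 \<le> 3 * p * (p - 1)" using assms(2) by simp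
  then have "30 * p \<le> 2 * delta_noniso G f" using d2 by linarith
  then show ?thesis using d1 assms(2) by linarith
qed

end
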